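(* Let $w$ be a perfectly clustering word over a totally ordered alphabet having a palindromic special factorization $w=a_1\pi_1a_2\pi_2\cdots\pi_{k-1}a_k$. Then for every $s\in\{1,\dots,k-1\}$, the word $\pi_s$ is empty if and only if $|w|_{a_1}+\cdots+|w|_{a_s}=|w|_{a_{s+1}}+\cdots+|w|_{a_k}$.
   Context: $|w|_a$ is the number of occurrences of the letter $a$ in $w$. A special factorization of $w$ is a factorization $w=a_1\pi_1a_2\cdots\pi_{k-1}a_k$ where the set of letters occurring in $w$ is $\{a_1<\cdots<a_k\}$ and $\pi_1,\dots,\pi_{k-1}$ are words; it is palindromic if every $\pi_i$ is a palindrome. Lexicographic order: a proper prefix is smaller. For a primitive word $v$ of length $n$ with conjugates $v_1<\cdots<v_n$, $\mathrm{bw}(v)$ is the word formed by the last letters of $v_1,\dots,v_n$; $v$ is perfectly clustering if it is primitive and $\mathrm{bw}(v)$ is weakly decreasing. *)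

theory Defs
  imports Main
begin

text \<open>Lexicographic order on words: a proper prefix is smaller.\<close>
definition lex_less :: "'a::linorder list \<Rightarrow> 'a list \<Rightarrow> bool" where
  "lex_less u v \<longleftrightarrow> (u, v) \<in> lexord {(x, y). x < y}"

definition primitive :: "'a list \<Rightarrow> bool" where
  "primitive v \<longleftrightarrow> v \<noteq> [] \<and> \<not> (\<exists>u k. k \<ge> 2 \<and> v = concat (replicate k u))"

definition conjugates :: "'a list \<Rightarrow> 'a list set" where
  "conjugates v = {rotate i v | i. i < length v}"

text \<open>Burrows-Wheeler transform: last letters of the conjugates listed in
  increasing lexicographic order.\<close>
definition bw :: "'a::linorder list \<Rightarrow> 'a list" where
  "bw v = map last (THE l. set l = conjugates v \<and> distinct l \<and> sorted_wrt lex_less l)"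

definition perfectly_clustering :: "'a::linorder list \<Rightarrow> bool" where
  "perfectly_clustering v \<longleftrightarrow> primitive v \<and> sorted_wrt (\<ge>) (bw v)"

text \<open>Special factorization w = a_1 pi_1 a_2 ... pi_(k-1) a_k, letters indexed 1..k.\<close>
definition special_factorization ::
  "'a::linorder list \<Rightarrow> nat \<Rightarrow> (nat \<Rightarrow> 'a) \<Rightarrow> (nat \<Rightarrow> 'a list) \<Rightarrow> bool" where
  "special_factorization w k a \<pi> \<longleftrightarrow>
     k \<ge> 1 \<and>
     (\<forall>i j. 1 \<le> i \<longrightarrow> i < j \<longrightarrow> j \<le> k \<longrightarrow> a i < a j) \<and>
     set w = a ` {1..k} \<and>
     w = concat (map (\<lambda>i. a i # \<pi> i) [1..<k]) @ [a k]"

definition palindromic_special_factorization ::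
  "'a::linorder list \<Rightarrow> nat \<Rightarrow> (nat \<Rightarrow> 'a) \<Rightarrow> (nat \<Rightarrow> 'a list) \<Rightarrow> bool" where
  "palindromic_special_factorization w k a \<pi> \<longleftrightarrow>
     special_factorization w k a \<pi> \<and> (\<forall>i\<in>{1..<k}. rev (\<pi> i) = \<pi> i)"

end

theory Submission
  imports Defs
begin

lemma lex_less_iff: "lex_less u v \<longleftrightarrow> ord_class.lexordp u v"
  by (simp add: lex_less_def lexordp_conv_lexord)

lemma lex_irrefl: "\<not> lex_less u u"
  by (simp add: lex_less_iff lexordp_irreflexive')

lemma lex_trans: "lex_less u v \<Longrightarrow> lex_less v x \<Longrightarrow> lex_less u x"
  unfolding lex_less_iff using lexordp_trans by blast

lemma lex_asym: "lex_less u v \<Longrightarrow> \<not> lex_less v u"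
  using lex_trans lex_irrefl by blast

lemma lex_total: "u \<noteq> v \<Longrightarrow> lex_less u v \<or> lex_less v u"
  unfolding lex_less_iff using lexordp_linear by blast

lemma lex_cons_less: "(x::'a::linorder) < y \<Longrightarrow> lex_less (x # u) (y # v)"
  by (simp add: lex_less_iff)

lemma lex_cons_eq: "lex_less ((x::'a::linorder) # u) (x # v) \<longleftrightarrow> lex_less u v"
  by (simp add: lex_less_iff)

lemma lex_snoc_mono:
  assumes "lex_less u v" "length u = length v"
  shows "lex_less (u @ [b]) (v @ [b])"
proof -
  from assms(1) have "ord_class.lexordp u v" by (simp add: lex_less_iff)
  then have "(\<exists>x vs. v = u @ x # vs) \<or> (\<exists>us a b vs ws. a < b \<and> u = us @ a # vs \<and> v = us @ b # ws)"
    by (simp add: lexordp_iff)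
  then show ?thesis
  proof
    assume "\<exists>x vs. v = u @ x # vs"
    then obtain x vs where "v = u @ x # vs" by blast
    with assms(2) have False by simp
    then show ?thesis ..
  next
    assume "\<exists>us a b vs ws. a < b \<and> u = us @ a # vs \<and> v = us @ b # ws"
    then obtain us a c vs ws where "a < c" "u = us @ a # vs" "v = us @ c # ws" by blast
    then show ?thesis unfolding lex_less_iff
      using lexordp_append_left_rightI[of a c us "vs @ [b]" "ws @ [b]"] by simp
  qed
qed

lemma lex_snoc_iff:
  assumes "length u = length v"
  shows "lex_less (u @ [b]) (v @ [b]) \<longleftrightarrow> lex_less u v"
proof
  assume h: "lex_less (u @ [b]) (v @ [b])"
  show "lex_less u v"
  proof (rule ccontr)
    assume "\<not> lex_less u v"
    moreover have "u \<noteq> v" using h lex_irrefl by blast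
    ultimately have "lex_less v u" using lex_total by blast
    then have "lex_less (v @ [b]) (u @ [b])" using lex_snoc_mono assms by metis
    then show False using h lex_asym by blast
  qed
qed (rule lex_snoc_mono[OF _ assms])

lemma sorted_exists:
  assumes "finite (S :: 'a::linorder list set)"
  shows "\<exists>l. set l = S \<and> distinct l \<and> sorted_wrt lex_less l"
  using assms
proof (induction rule: finite_induct)
  case empty
  then show ?case by auto
next
  case (insert x F)
  then obtain l where l: "set l = F" "distinct l" "sorted_wrt lex_less l" by blast
  define l' where "l' = filter (\<lambda>y. lex_less y x) l @ x # filter (\<lambda>y. lex_less x y) l"
  have "set l' = insert x F"
    using l(1) insert.hyps(2) lex_total unfolding l'_def by auto
  moreover have "distinct l'"
    using l(2) lex_irrefl lex_asym unfolding l'_def by auto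
  moreover have "sorted_wrt lex_less l'"
    using l(3) unfolding l'_def
    by (auto simp: sorted_wrt_append sorted_wrt_filter intro: lex_trans)
  ultimately show ?case by blast
qed

lemma sorted_unique:
  "set l1 = set l2 \<Longrightarrow> distinct l1 \<Longrightarrow> distinct l2 \<Longrightarrow> sorted_wrt lex_less l1
   \<Longrightarrow> sorted_wrt lex_less l2 \<Longrightarrow> l1 = l2"
proof (induction l1 arbitrary: l2)
  case Nil
  then show ?case by simp
next
  case (Cons x xs)
  then obtain y ys where l2: "l2 = y # ys" by (cases l2) auto
  have "x = y"
  proof (rule ccontr)
    assume "x \<noteq> y"
    then have "y \<in> set xs" "x \<in> set ys" using Cons.prems(1) l2 by auto
    then have "lex_less x y" "lex_less y x" using Cons.prems(4,5) l2 by auto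
    then show False using lex_asym by blast
  qed
  moreover have "set xs = set ys" using Cons.prems(1-3) l2 \<open>x = y\<close> by auto
  ultimately show ?case using Cons l2 by auto
qed

lemma bw_prop:
  assumes "perfectly_clustering w" "u \<in> conjugates w" "v \<in> conjugates w" "lex_less u v"
  shows "last v \<le> last u"
proof -
  have fin: "finite (conjugates w)" unfolding conjugates_def by auto
  let ?P = "\<lambda>l. set l = conjugates w \<and> distinct l \<and> sorted_wrt lex_less l"
  have ex1: "\<exists>!l. ?P l" using sorted_exists[OF fin] sorted_unique by metis
  define l where "l = (THE l. ?P l)"
  have Pl: "?P l" unfolding l_def using theI'[OF ex1] .
  have bw: "bw w = map last l" unfolding bw_def l_def by simp
  obtain i where i: "i < length l" "l ! i = u" using Pl assms(2) by (metis in_set_conv_nth)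
  obtain j where j: "j < length l" "l ! j = v" using Pl assms(3) by (metis in_set_conv_nth)
  have "i < j"
  proof (rule ccontr)
    assume "\<not> i < j"
    moreover have "i \<noteq> j" using i j assms(4) lex_irrefl by blast
    ultimately have "j < i" by simp
    then have "lex_less v u" using Pl i j sorted_wrt_nth_less by metis
    then show False using assms(4) lex_asym by blast
  qed
  have "sorted_wrt (\<ge>) (map last l)" using assms(1) bw unfolding perfectly_clustering_def by simp
  then have "last (l ! j) \<le> last (l ! i)"
    using \<open>i < j\<close> j unfolding sorted_wrt_iff_nth_less by (metis length_map nth_map order.strict_trans)
  then show ?thesis using i j by simp
qed


lemma concat_replicate_nth:
  assumes "length u = g" "0 < g"
  shows "i < m * g \<Longrightarrow> concat (replicate m u) ! i = u ! (i mod g)"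
proof (induction m arbitrary: i)
  case 0
  then show ?case by simp
next
  case (Suc m)
  show ?case
  proof (cases "i < g")
    case True
    then show ?thesis using assms by (simp add: nth_append)
  next
    case False
    then have "i - g < m * g" using Suc.prems by simp
    then have "concat (replicate m u) ! (i - g) = u ! ((i - g) mod g)" using Suc.IH by blast
    moreover have "(i - g) mod g = i mod g" using False by (simp add: le_mod_geq)
    ultimately show ?thesis using False assms by (simp add: nth_append)
  qed
qed

lemma rotate_fixed_not_primitive:
  assumes rot: "rotate d w = w" and d: "0 < d" "d < length w"
  shows "\<not> primitive w"
proof -
  define n where "n = length w"
  have n0: "0 < n" using d unfolding n_def by linarith
  have P: "w ! ((i + d) mod n) = w ! (i mod n)" for i
  proof -
    have "rotate d w ! (i mod n) = w ! ((i mod n + d) mod n)"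
      using nth_rotate[of "i mod n" w d] n0 n_def by (simp add: add.commute)
    then show ?thesis using rot by (simp add: mod_add_left_eq)
  qed
  have Pt: "w ! ((i + t * d) mod n) = w ! (i mod n)" for i t
  proof (induction t)
    case 0
    then show ?case by simp
  next
    case (Suc t)
    have "w ! ((i + Suc t * d) mod n) = w ! (((i + t * d) + d) mod n)" by (simp add: algebra_simps)
    also have "\<dots> = w ! ((i + t * d) mod n)" using P by blast
    finally show ?case using Suc by simp
  qed
  define g where "g = gcd d n"
  obtain x y where xy: "d * x = n * y + g" using bezout_nat[of d n] d g_def by auto
  have Q: "w ! ((i + g) mod n) = w ! (i mod n)" for i
  proof -
    have "(i + x * d) mod n = (i + g + n * y) mod n" using xy by (simp add: algebra_simps)
    also have "\<dots> = (i + g) mod n" by simp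
    finally show ?thesis using Pt[of i x] by simp
  qed
  have g0: "0 < g" using g_def d by simp
  have gd: "g \<le> d" using g_def d by (simp add: gcd_le1_nat)
  have gn: "g dvd n" using g_def by simp
  have R: "i < n \<Longrightarrow> w ! i = w ! (i mod g)" for i
  proof (induction i rule: less_induct)
    case (less i)
    show ?case
    proof (cases "i < g")
      case True
      then show ?thesis by simp
    next
      case False
      then have "i - g < i" using g0 by linarith
      then have "w ! (i - g) = w ! ((i - g) mod g)" using less by simp
      moreover have "(i - g) mod g = i mod g" using False by (simp add: le_mod_geq)
      moreover have "w ! i = w ! (i - g)"
      proof -
        have "w ! (((i - g) + g) mod n) = w ! ((i - g) mod n)" using Q by blast
        then show ?thesis using False less.prems by simp
      qed
      ultimately show ?thesis by simp
    qed
  qed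
  have len: "n div g * g = n" using gn by simp
  have eq: "w = concat (replicate (n div g) (take g w))"
  proof (rule nth_equalityI)
    show "length w = length (concat (replicate (n div g) (take g w)))"
      using len gd d n_def by (simp add: length_concat sum_list_replicate min_def)
    fix i assume "i < length w"
    then have i: "i < n" using n_def by simp
    have lt: "length (take g w) = g" using gd d n_def by simp
    have "concat (replicate (n div g) (take g w)) ! i = take g w ! (i mod g)"
      using concat_replicate_nth[OF lt g0] i len by simp
    also have "\<dots> = w ! (i mod g)" using g0 by simp
    finally show "w ! i = concat (replicate (n div g) (take g w)) ! i" using R i by simp
  qed
  have "2 \<le> n div g"
  proof -
    have "g < n" using gd d n_def by simp
    then have "n div g \<noteq> 1" using len by auto
    moreover have "n div g \<noteq> 0" using len n0 by (metis mult_0 less_irrefl)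
    ultimately show ?thesis by linarith
  qed
  then show ?thesis unfolding primitive_def using eq by blast
qed

lemma rotate_inj:
  assumes "primitive w" "x < length w" "y < length w" "rotate x w = rotate y w"
  shows "x = y"
proof -
  have main: "False" if "x' < y'" "y' < length w" "rotate x' w = rotate y' w" for x' y'
  proof -
    have "rotate (length w - x') (rotate x' w) = rotate (length w - x') (rotate y' w)"
      using that by simp
    moreover have "rotate (length w - x') (rotate x' w) = w"
      using \<open>x' < y'\<close> \<open>y' < length w\<close> by (simp add: rotate_rotate)
    moreover have "rotate (length w - x') (rotate y' w) = rotate (length w - x' + y') w"
      by (simp add: rotate_rotate)
    ultimately have "w = rotate (length w - x' + y') w" by simp
    moreover have "rotate (length w - x' + y') w = rotate (y' - x') w"
    proof -
      have "(length w - x' + y') mod length w = (y' - x') mod length w"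
      proof -
        have "length w - x' + y' = (y' - x') + length w" using that by simp
        then show ?thesis by simp
      qed
      then show ?thesis by (metis rotate_conv_mod)
    qed
    ultimately have "rotate (y' - x') w = w" by simp
    moreover have "y' - x' < length w" "0 < y' - x'" using that by linarith+
    ultimately show False using rotate_fixed_not_primitive[of "y' - x'" w] assms(1) by blast
  qed
  show ?thesis
    using main[of x y] main[of y x] assms by (metis linorder_neqE_nat)
qed


definition rk :: "'a::linorder list \<Rightarrow> nat \<Rightarrow> nat" where
  "rk w j = card {x. x < length w \<and> lex_less (rotate x w) (rotate j w)}"

definition ee :: "'a::linorder list \<Rightarrow> nat \<Rightarrow> nat" where
  "ee w j = card {x. x < length w \<and> w ! x = w ! j \<and> lex_less (rotate x w) (rotate j w)}"

definition ltc :: "'a::linorder list \<Rightarrow> 'a \<Rightarrow> nat" where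
  "ltc w b = card {x. x < length w \<and> w ! x < b}"

definition gtc :: "'a::linorder list \<Rightarrow> 'a \<Rightarrow> nat" where
  "gtc w b = card {x. x < length w \<and> b < w ! x}"

lemma rot_nth0: "j < length w \<Longrightarrow> rotate j w ! 0 = w ! j"
  using nth_rotate[of 0 w j] by (cases w) auto

lemma rot_cons: "j < length w \<Longrightarrow> rotate j w = w ! j # tl (rotate j w)"
  using rot_nth0[of j w]
  by (metis length_greater_0_conv length_rotate list.collapse nth_Cons_0 order.strict_trans1 zero_le)

lemma rot_Suc: "j < length w \<Longrightarrow> rotate (Suc j) w = tl (rotate j w) @ [w ! j]"
proof -
  assume j: "j < length w"
  have ne: "rotate j w \<noteq> []" using j by auto
  have "rotate (Suc j) w = rotate1 (rotate j w)" by simp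
  also have "\<dots> = tl (rotate j w) @ [hd (rotate j w)]" using ne by (rule rotate1_hd_tl)
  also have "hd (rotate j w) = w ! j" using rot_nth0[OF j] ne by (simp add: hd_conv_nth)
  finally show ?thesis .
qed

lemma last_rot_Suc: "j < length w \<Longrightarrow> last (rotate (Suc j) w) = w ! j"
  by (metis rot_Suc last_snoc)

lemma rot_conj: "w \<noteq> [] \<Longrightarrow> rotate x w \<in> conjugates w"
  unfolding conjugates_def
  by (rule CollectI, rule exI[of _ "x mod length w"]) (simp add: rotate_conv_mod[symmetric])

lemma pc_prim: "perfectly_clustering w \<Longrightarrow> primitive w"
  by (simp add: perfectly_clustering_def)

lemma pc_ne: "perfectly_clustering w \<Longrightarrow> w \<noteq> []"
  by (simp add: perfectly_clustering_def primitive_def)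

lemma PC: "perfectly_clustering w \<Longrightarrow> lex_less (rotate x w) (rotate y w)
   \<Longrightarrow> last (rotate y w) \<le> last (rotate x w)"
  using bw_prop rot_conj pc_ne by metis

lemma lex_first: "x < length w \<Longrightarrow> j < length w \<Longrightarrow> w ! x < w ! j \<Longrightarrow> lex_less (rotate x w) (rotate j w)"
  by (metis rot_cons lex_cons_less)

lemma rot_neq: "perfectly_clustering w \<Longrightarrow> x < length w \<Longrightarrow> y < length w \<Longrightarrow> x \<noteq> y
  \<Longrightarrow> rotate x w \<noteq> rotate y w"
  using rotate_inj pc_prim by blast

lemma rk_split:
  assumes pc: "perfectly_clustering w" and j: "j < length w"
  shows "rk w j = ltc w (w ! j) + ee w j"
proof -
  let ?A = "{x. x < length w \<and> w ! x < w ! j}"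
  let ?B = "{x. x < length w \<and> w ! x = w ! j \<and> lex_less (rotate x w) (rotate j w)}"
  have "{x. x < length w \<and> lex_less (rotate x w) (rotate j w)} = ?A \<union> ?B"
  proof (rule set_eqI, rule iffI)
    fix x assume x: "x \<in> {x. x < length w \<and> lex_less (rotate x w) (rotate j w)}"
    have "\<not> w ! j < w ! x"
    proof
      assume "w ! j < w ! x"
      then have "lex_less (rotate j w) (rotate x w)" using lex_first x j by blast
      then show False using x lex_asym by blast
    qed
    then show "x \<in> ?A \<union> ?B" using x by auto
  next
    fix x assume "x \<in> ?A \<union> ?B"
    then show "x \<in> {x. x < length w \<and> lex_less (rotate x w) (rotate j w)}"
      using lex_first j by auto
  qed
  moreover have "card (?A \<union> ?B) = card ?A + card ?B"
    by (rule card_Un_disjoint) auto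
  ultimately show ?thesis unfolding rk_def ltc_def ee_def by simp
qed

lemma card_shift:
  assumes n: "0 < n"
  shows "card {x. x < n \<and> P x} = card {y. y < n \<and> P (Suc y mod n)}"
proof -
  let ?f = "\<lambda>y. Suc y mod n"
  have m: "y < n \<Longrightarrow> Suc y mod n = (if Suc y = n then 0 else Suc y)" for y by auto
  have "bij_betw ?f {y. y < n \<and> P (Suc y mod n)} {x. x < n \<and> P x}"
  proof (rule bij_betw_imageI)
    show "inj_on ?f {y. y < n \<and> P (Suc y mod n)}"
      by (rule inj_onI) (auto simp: m split: if_splits)
    show "?f ` {y. y < n \<and> P (Suc y mod n)} = {x. x < n \<and> P x}"
    proof (rule set_eqI, rule iffI)
      fix x assume "x \<in> ?f ` {y. y < n \<and> P (Suc y mod n)}"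
      then show "x \<in> {x. x < n \<and> P x}" using n by auto
    next
      fix x assume x: "x \<in> {x. x < n \<and> P x}"
      define y where "y = (if x = 0 then n - 1 else x - 1)"
      have "y < n" "Suc y mod n = x" using x n unfolding y_def by auto
      then show "x \<in> ?f ` {y. y < n \<and> P (Suc y mod n)}" using x by force
    qed
  qed
  then show ?thesis by (simp add: bij_betw_same_card)
qed

lemma rk_Suc:
  assumes pc: "perfectly_clustering w" and j: "j < length w"
  shows "rk w (Suc j) = gtc w (w ! j) + ee w j"
proof -
  define n where "n = length w"
  have n0: "0 < n" using j n_def by linarith
  have "rk w (Suc j) = card {y. y < n \<and> lex_less (rotate (Suc y mod n) w) (rotate (Suc j) w)}"
    unfolding rk_def n_def[symmetric]
    by (rule card_shift[OF n0, of "\<lambda>x. lex_less (rotate x w) (rotate (Suc j) w)"])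
  also have "{y. y < n \<and> lex_less (rotate (Suc y mod n) w) (rotate (Suc j) w)} =
     {y. y < n \<and> lex_less (rotate (Suc y) w) (rotate (Suc j) w)}"
    using rotate_conv_mod[of "Suc _" w] n_def by (metis (no_types))
  also have "\<dots> = {y. y < n \<and> w ! j < w ! y} \<union>
      {y. y < n \<and> w ! y = w ! j \<and> lex_less (rotate y w) (rotate j w)}"
  proof (rule set_eqI)
    fix y
    show "y \<in> {y. y < n \<and> lex_less (rotate (Suc y) w) (rotate (Suc j) w)} \<longleftrightarrow>
      y \<in> {y. y < n \<and> w ! j < w ! y} \<union> {y. y < n \<and> w ! y = w ! j \<and> lex_less (rotate y w) (rotate j w)}"
    proof (cases "y < n")
      case False
      then show ?thesis by simp
    next
      case y: True
      have ly: "last (rotate (Suc y) w) = w ! y" using y n_def last_rot_Suc by metis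
      have lj: "last (rotate (Suc j) w) = w ! j" using j last_rot_Suc by metis
      consider "w ! j < w ! y" | "w ! y < w ! j" | "w ! y = w ! j" by fastforce
      then show ?thesis
      proof cases
        case 1
        have "rotate (Suc y) w \<noteq> rotate (Suc j) w" using ly lj 1 by auto
        moreover have "\<not> lex_less (rotate (Suc j) w) (rotate (Suc y) w)"
          using PC[OF pc, of "Suc j" "Suc y"] ly lj 1 by auto
        ultimately have "lex_less (rotate (Suc y) w) (rotate (Suc j) w)" using lex_total by blast
        then show ?thesis using y 1 by auto
      next
        case 2
        have "\<not> lex_less (rotate (Suc y) w) (rotate (Suc j) w)"
          using PC[OF pc, of "Suc y" "Suc j"] ly lj 2 by auto
        then show ?thesis using y 2 by auto
      next
        case 3
        have len: "length (tl (rotate y w)) = length (tl (rotate j w))" by simp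
        have "lex_less (rotate (Suc y) w) (rotate (Suc j) w) \<longleftrightarrow>
              lex_less (tl (rotate y w)) (tl (rotate j w))"
          using rot_Suc[of y w] rot_Suc[OF j] y n_def 3 lex_snoc_iff[OF len] by metis
        also have "\<dots> \<longleftrightarrow> lex_less (rotate y w) (rotate j w)"
          using rot_cons[of y w] rot_cons[OF j] y n_def 3 lex_cons_eq by metis
        finally show ?thesis using y 3 by auto
      qed
    qed
  qed
  also have "card \<dots> = gtc w (w ! j) + ee w j"
    unfolding gtc_def ee_def n_def by (rule card_Un_disjoint) auto
  finally show ?thesis .
qed

lemma rk_less: "j < length w \<Longrightarrow> rk w j < length w"
proof -
  assume j: "j < length w"
  have "{x. x < length w \<and> lex_less (rotate x w) (rotate j w)} \<subseteq> {..<length w} - {j}"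
    using lex_irrefl by blast
  then have "rk w j \<le> card ({..<length w} - {j})" unfolding rk_def by (rule card_mono[rotated]) auto
  then show ?thesis using j by simp
qed

lemma rk_mono:
  assumes "x < length w" "y < length w" "lex_less (rotate x w) (rotate y w)"
  shows "rk w x < rk w y"
proof -
  have "{z. z < length w \<and> lex_less (rotate z w) (rotate x w)} \<subset> {z. z < length w \<and> lex_less (rotate z w) (rotate y w)}"
  proof
    show "{z. z < length w \<and> lex_less (rotate z w) (rotate x w)} \<subseteq> {z. z < length w \<and> lex_less (rotate z w) (rotate y w)}"
      using assms(3) lex_trans by blast
    have "x \<in> {z. z < length w \<and> lex_less (rotate z w) (rotate y w)}" using assms by simp
    moreover have "x \<notin> {z. z < length w \<and> lex_less (rotate z w) (rotate x w)}" using lex_irrefl by blast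
    ultimately show "{z. z < length w \<and> lex_less (rotate z w) (rotate x w)} \<noteq> {z. z < length w \<and> lex_less (rotate z w) (rotate y w)}" by blast
  qed
  then show ?thesis unfolding rk_def by (rule psubset_card_mono[rotated]) auto
qed

lemma rk_inj:
  assumes pc: "perfectly_clustering w" and "x < length w" "y < length w" "rk w x = rk w y"
  shows "x = y"
proof (rule ccontr)
  assume "x \<noteq> y"
  then have "rotate x w \<noteq> rotate y w" using rot_neq pc assms by blast
  then have "lex_less (rotate x w) (rotate y w) \<or> lex_less (rotate y w) (rotate x w)" using lex_total by blast
  then show False using rk_mono assms by (metis less_irrefl)
qed

lemma sum_rk:
  assumes pc: "perfectly_clustering w"
  shows "(\<Sum>j<length w. rk w j) = (\<Sum>r<length w. r)"
proof -
  have inj: "inj_on (rk w) {..<length w}" using rk_inj pc by (meson inj_onI lessThan_iff)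
  have "rk w ` {..<length w} = {..<length w}"
    using endo_inj_surj[OF _ _ inj] rk_less by auto
  then have "(\<Sum>r<length w. r) = (\<Sum>r\<in>rk w ` {..<length w}. r)" by simp
  also have "\<dots> = (\<Sum>j<length w. rk w j)" using sum.reindex[OF inj] by simp
  finally show ?thesis by simp
qed


definition qq :: "(nat \<Rightarrow> 'a list) \<Rightarrow> nat \<Rightarrow> nat" where
  "qq \<pi> i = (\<Sum>t\<in>{1..<i}. length (\<pi> t) + 1)"

lemma qq_1: "qq \<pi> 1 = 0" by (simp add: qq_def)

lemma qq_Suc0 [simp]: "qq \<pi> (Suc 0) = 0" by (simp add: qq_def)

lemma qq_Suc: "1 \<le> i \<Longrightarrow> qq \<pi> (Suc i) = qq \<pi> i + length (\<pi> i) + 1"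
  unfolding qq_def by (simp add: sum.atLeastLessThan_Suc)

lemma qq_mono: "i \<le> j \<Longrightarrow> qq \<pi> i \<le> qq \<pi> j"
  unfolding qq_def by (rule sum_mono2) auto

lemma sum_split_add: "(\<Sum>p<x + y. f p) = (\<Sum>p<x. f p) + (\<Sum>m<y. f (x + m :: nat))"
  by (induction y) (simp_all add: add.assoc)

lemma gauss2: "2 * (\<Sum>r<n. r) = n * (n - 1 :: nat)"
proof (induction n)
  case 0 then show ?case by simp
next
  case (Suc n)
  then show ?case by (cases n) (simp_all add: algebra_simps)
qed

context
  fixes w :: "'a::linorder list" and k :: nat and a :: "nat \<Rightarrow> 'a" and \<pi> :: "nat \<Rightarrow> 'a list"
  assumes pc: "perfectly_clustering w"
    and psf: "palindromic_special_factorization w k a \<pi>"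
begin

lemma k1: "1 \<le> k" using psf
  unfolding palindromic_special_factorization_def special_factorization_def by blast

lemma amono: "1 \<le> i \<Longrightarrow> i < j \<Longrightarrow> j \<le> k \<Longrightarrow> a i < a j" using psf
  unfolding palindromic_special_factorization_def special_factorization_def by blast

lemma setw: "set w = a ` {1..k}" using psf
  unfolding palindromic_special_factorization_def special_factorization_def by blast

lemma wdef: "w = concat (map (\<lambda>i. a i # \<pi> i) [1..<k]) @ [a k]" using psf
  unfolding palindromic_special_factorization_def special_factorization_def by blast

lemma pal: "1 \<le> i \<Longrightarrow> i < k \<Longrightarrow> rev (\<pi> i) = \<pi> i" using psf
  unfolding palindromic_special_factorization_def by simp

lemma a_less_iff: "t \<in> {1..k} \<Longrightarrow> u \<in> {1..k} \<Longrightarrow> a t < a u \<longleftrightarrow> t < u"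
  using amono by (metis atLeastAtMost_iff less_asym linorder_neqE_nat)

lemma a_inj: "t \<in> {1..k} \<Longrightarrow> u \<in> {1..k} \<Longrightarrow> a t = a u \<longleftrightarrow> t = u"
  using a_less_iff by (metis less_irrefl linorder_neqE_nat)

lemma letter: "y < length w \<Longrightarrow> \<exists>t\<in>{1..k}. w ! y = a t"
  using setw nth_mem by (metis imageE)

lemma drop_qq: "1 \<le> i \<Longrightarrow> i \<le> k \<Longrightarrow>
  drop (qq \<pi> i) w = concat (map (\<lambda>t. a t # \<pi> t) [i..<k]) @ [a k]"
proof (induction i)
  case 0 then show ?case by simp
next
  case (Suc i)
  show ?case
  proof (cases "i = 0")
    case True
    then show ?thesis using wdef by (simp add: qq_def)
  next
    case False
    then have i1: "1 \<le> i" and ik: "i < k" using Suc.prems by auto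
    have "drop (qq \<pi> i) w = (a i # \<pi> i) @ concat (map (\<lambda>t. a t # \<pi> t) [Suc i..<k]) @ [a k]"
      using Suc.IH i1 ik by (simp add: upt_conv_Cons)
    then have "drop (length (\<pi> i) + 1) (drop (qq \<pi> i) w) = concat (map (\<lambda>t. a t # \<pi> t) [Suc i..<k]) @ [a k]"
      by simp
    then show ?thesis using qq_Suc[OF i1, of \<pi>] by (simp add: add.commute)
  qed
qed

lemma qq_lt: "1 \<le> i \<Longrightarrow> i \<le> k \<Longrightarrow> qq \<pi> i < length w"
proof -
  assume "1 \<le> i" "i \<le> k"
  then have "drop (qq \<pi> i) w \<noteq> []" using drop_qq by simp
  then show ?thesis by simp
qed

lemma w_qq: "1 \<le> i \<Longrightarrow> i \<le> k \<Longrightarrow> w ! (qq \<pi> i) = a i"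
proof -
  assume i: "1 \<le> i" "i \<le> k"
  have "w ! (qq \<pi> i) = drop (qq \<pi> i) w ! 0" using qq_lt[OF i] by simp
  also have "\<dots> = a i"
  proof (cases "i = k")
    case True
    then show ?thesis using drop_qq[OF i] by simp
  next
    case False
    then show ?thesis using drop_qq[OF i] i by (simp add: upt_conv_Cons)
  qed
  finally show ?thesis .
qed

lemma qq_k: "qq \<pi> k = length w - 1"
proof -
  have "drop (qq \<pi> k) w = [a k]" using drop_qq[of k] k1 by simp
  then have "length (drop (qq \<pi> k) w) = 1" by simp
  then have "length w - qq \<pi> k = 1" by (simp only: length_drop)
  then show ?thesis by simp
qed

lemma w_pi: "1 \<le> i \<Longrightarrow> i < k \<Longrightarrow> m < length (\<pi> i) \<Longrightarrow> w ! (qq \<pi> i + 1 + m) = \<pi> i ! m"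
proof -
  assume i: "1 \<le> i" "i < k" and m: "m < length (\<pi> i)"
  have d: "drop (qq \<pi> i) w = (a i # \<pi> i) @ concat (map (\<lambda>t. a t # \<pi> t) [Suc i..<k]) @ [a k]"
    using drop_qq[of i] i by (simp add: upt_conv_Cons)
  have "qq \<pi> (Suc i) \<le> qq \<pi> k" using i by (intro qq_mono) simp
  then have lt: "qq \<pi> i + 1 + m < length w" using qq_Suc[of i \<pi>] i m qq_k qq_lt[of k] k1 by simp
  have "w ! (qq \<pi> i + 1 + m) = drop (qq \<pi> i) w ! (1 + m)" using lt by simp
  also have "\<dots> = \<pi> i ! m" using d m by (simp add: nth_append)
  finally show ?thesis .
qed

lemma qq_Suc_lt: "1 \<le> i \<Longrightarrow> i < k \<Longrightarrow> qq \<pi> (Suc i) < length w"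
  using qq_lt by simp

lemma gt_lt_compl: "1 \<le> i \<Longrightarrow> i < k \<Longrightarrow> gtc w (a i) + ltc w (a (Suc i)) = length w"
proof -
  assume i: "1 \<le> i" "i < k"
  let ?A = "{y. y < length w \<and> a i < w ! y}"
  let ?B = "{y. y < length w \<and> w ! y < a (Suc i)}"
  have AB: "?A \<union> ?B = {..<length w}" "?A \<inter> ?B = {}"
  proof -
    have "a i < w ! y \<longleftrightarrow> \<not> w ! y < a (Suc i)" if y: "y < length w" for y
    proof -
      obtain t where t: "t \<in> {1..k}" "w ! y = a t" using letter[OF y] by blast
      have "a i < a t \<longleftrightarrow> i < t" using a_less_iff t i by simp
      moreover have "a t < a (Suc i) \<longleftrightarrow> t < Suc i" using a_less_iff t i by simp
      ultimately show ?thesis using t by auto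
    qed
    then show "?A \<union> ?B = {..<length w}" "?A \<inter> ?B = {}" by auto
  qed
  have "card ?A + card ?B = card (?A \<union> ?B)" using AB(2) by (intro card_Un_disjoint[symmetric]) auto
  then show ?thesis using AB(1) unfolding gtc_def ltc_def by simp
qed

lemma ltc_a1: "ltc w (a 1) = 0"
proof -
  have "{y. y < length w \<and> w ! y < a 1} = {}"
  proof -
    have "\<not> w ! y < a 1" if y: "y < length w" for y
    proof -
      obtain t where t: "t \<in> {1..k}" "w ! y = a t" using letter[OF y] by blast
      then show ?thesis using a_less_iff[of t 1] k1 by auto
    qed
    then show ?thesis by auto
  qed
  then show ?thesis unfolding ltc_def by simp
qed

abbreviation "e i \<equiv> ee w (qq \<pi> i)"

lemma step_eq: "j < length w \<Longrightarrow> rk w (Suc j) + ltc w (w ! j) = rk w j + gtc w (w ! j)"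
  using rk_split[OF pc] rk_Suc[OF pc] by simp

lemma block_const:
  assumes i: "1 \<le> i" "i < k"
  shows "m \<le> length (\<pi> i) \<Longrightarrow>
    rk w (qq \<pi> i + 1 + m) + rk w (qq \<pi> (Suc i) - m) = length w + e i + e (Suc i)"
proof (induction m)
  case 0
  have "rk w (qq \<pi> i + 1) = gtc w (a i) + e i"
    using rk_Suc[OF pc qq_lt[of i]] w_qq[of i] i by simp
  moreover have "rk w (qq \<pi> (Suc i)) = ltc w (a (Suc i)) + e (Suc i)"
    using rk_split[OF pc qq_Suc_lt[OF i]] w_qq[of "Suc i"] i by simp
  ultimately show ?case using gt_lt_compl[OF i] by simp
next
  case (Suc m)
  define l where "l = length (\<pi> i)"
  define Q where "Q = qq \<pi> i"
  have Q': "qq \<pi> (Suc i) = Q + l + 1" unfolding Q_def l_def using qq_Suc i by simp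
  have ml: "m < l" using Suc.prems l_def by simp
  define j1 where "j1 = Q + 1 + m"
  define j2 where "j2 = Q + 1 + (l - 1 - m)"
  have n: "Q + l + 1 < length w" using qq_Suc_lt[OF i] Q' by simp
  have j1n: "j1 < length w" using ml n j1_def by simp
  have j2n: "j2 < length w" using ml n j2_def by simp
  have w1: "w ! j1 = \<pi> i ! m" unfolding j1_def Q_def
    by (rule w_pi[OF i]) (use ml l_def in simp)
  have "w ! j2 = \<pi> i ! (l - 1 - m)" unfolding j2_def Q_def
    by (rule w_pi[OF i]) (use ml l_def in simp)
  also have "\<dots> = rev (\<pi> i) ! m" using ml l_def by (simp add: rev_nth)
  also have "\<dots> = \<pi> i ! m" using pal i by simp
  finally have w2: "w ! j2 = w ! j1" using w1 by simp
  have e1: "rk w (Suc j1) + ltc w (w ! j1) = rk w j1 + gtc w (w ! j1)" using step_eq j1n by blast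
  have e2: "rk w (Suc j2) + ltc w (w ! j1) = rk w j2 + gtc w (w ! j1)" using step_eq j2n w2 by metis
  have IH: "rk w j1 + rk w (Suc j2) = length w + e i + e (Suc i)"
  proof -
    have "qq \<pi> (Suc i) - m = Suc j2" using Q' ml j2_def by simp
    then show ?thesis using Suc.IH Suc.prems j1_def Q_def by simp
  qed
  have "qq \<pi> i + 1 + Suc m = Suc j1" using j1_def Q_def by simp
  moreover have "qq \<pi> (Suc i) - Suc m = j2" using Q' ml j2_def by simp
  ultimately show ?case using e1 e2 IH by simp
qed

definition blk :: "nat \<Rightarrow> nat" where
  "blk i = (\<Sum>m<length (\<pi> i) + 1. rk w (qq \<pi> i + 1 + m))"

lemma blk2:
  assumes i: "1 \<le> i" "i < k"
  shows "2 * blk i = (length (\<pi> i) + 1) * (length w + e i + e (Suc i))"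
proof -
  define l where "l = length (\<pi> i)"
  define g where "g = (\<lambda>m. rk w (qq \<pi> i + 1 + m))"
  have Q': "qq \<pi> (Suc i) = qq \<pi> i + l + 1" unfolding l_def using qq_Suc i by simp
  have "(\<Sum>m<l + 1. rk w (qq \<pi> (Suc i) - m)) = (\<Sum>m<l + 1. g (l + 1 - Suc m))"
    by (rule sum.cong) (auto simp: g_def Q' Suc_diff_le)
  also have "\<dots> = (\<Sum>m<l + 1. g m)" by (rule sum.nat_diff_reindex)
  finally have r: "(\<Sum>m<l + 1. rk w (qq \<pi> (Suc i) - m)) = (\<Sum>m<l + 1. g m)" .
  have "(\<Sum>m<l + 1. g m + rk w (qq \<pi> (Suc i) - m)) = (\<Sum>m<l + 1. length w + e i + e (Suc i))"
  proof (rule sum.cong)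
    fix m assume "m \<in> {..<l + 1}"
    then have "m \<le> length (\<pi> i)" using l_def by simp
    then show "g m + rk w (qq \<pi> (Suc i) - m) = length w + e i + e (Suc i)"
      using block_const[OF i] unfolding g_def by blast
  qed simp
  then have "(\<Sum>m<l + 1. g m) + (\<Sum>m<l + 1. rk w (qq \<pi> (Suc i) - m)) = (l + 1) * (length w + e i + e (Suc i))"
    by (simp add: sum.distrib)
  then show ?thesis using r unfolding blk_def g_def l_def by simp
qed

lemma partition_sum:
  "1 \<le> i \<Longrightarrow> i \<le> k \<Longrightarrow> (\<Sum>p<qq \<pi> i + 1. rk w p) = rk w 0 + (\<Sum>t\<in>{1..<i}. blk t)"
proof (induction i)
  case 0 then show ?case by simp
next
  case (Suc i)
  show ?case
  proof (cases "i = 0")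
    case True
    then show ?thesis by (simp add: qq_1)
  next
    case False
    then have i1: "1 \<le> i" and ik: "i < k" using Suc.prems by auto
    have "qq \<pi> (Suc i) + 1 = (qq \<pi> i + 1) + (length (\<pi> i) + 1)" using qq_Suc[OF i1] by simp
    then have "(\<Sum>p<qq \<pi> (Suc i) + 1. rk w p) = (\<Sum>p<qq \<pi> i + 1. rk w p) + blk i"
      unfolding blk_def using sum_split_add by (metis add.assoc)
    then show ?thesis using Suc.IH i1 ik by (simp add: sum.atLeastLessThan_Suc)
  qed
qed

lemma all_e_zero: "1 \<le> t \<Longrightarrow> t < k \<Longrightarrow> e t = 0 \<and> e (Suc t) = 0"
proof -
  assume t: "1 \<le> t" "t < k"
  define n where "n = length w"
  have n0: "0 < n" using pc_ne[OF pc] n_def by simp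
  have nk: "qq \<pi> k + 1 = n" using qq_k n0 n_def by simp
  have S: "(\<Sum>p<n. rk w p) = rk w 0 + (\<Sum>t\<in>{1..<k}. blk t)"
    unfolding nk[symmetric] using partition_sum[of k] k1 by blast
  have G: "2 * (\<Sum>p<n. rk w p) = n * (n - 1)" using sum_rk[OF pc] gauss2 n_def by simp
  have r0: "rk w 0 = e 1"
    using rk_split[OF pc, of 0] n0 n_def ltc_a1 w_qq[of 1] k1 qq_1 by simp
  have L: "(\<Sum>t\<in>{1..<k}. length (\<pi> t) + 1) = n - 1" using qq_k n_def unfolding qq_def by simp
  have B: "(\<Sum>t\<in>{1..<k}. 2 * blk t) = (\<Sum>t\<in>{1..<k}. (length (\<pi> t) + 1) * (n + e t + e (Suc t)))"
    by (rule sum.cong) (auto simp: blk2 n_def)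
  also have "\<dots> = n * (\<Sum>t\<in>{1..<k}. length (\<pi> t) + 1) + (\<Sum>t\<in>{1..<k}. (length (\<pi> t) + 1) * (e t + e (Suc t)))"
    by (simp add: algebra_simps sum.distrib sum_distrib_left sum_distrib_right)
  finally have B1: "(\<Sum>t\<in>{1..<k}. 2 * blk t) = n * (n - 1) + (\<Sum>t\<in>{1..<k}. (length (\<pi> t) + 1) * (e t + e (Suc t)))"
    by (simp only: L)
  have B2: "2 * (\<Sum>t\<in>{1..<k}. blk t) = n * (n - 1) + (\<Sum>t\<in>{1..<k}. (length (\<pi> t) + 1) * (e t + e (Suc t)))"
    using B1 by (simp only: sum_distrib_left)
  have "(\<Sum>t\<in>{1..<k}. (length (\<pi> t) + 1) * (e t + e (Suc t))) = 0"
    using S G B2 r0 by linarith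
  then have "(length (\<pi> t) + 1) * (e t + e (Suc t)) = 0" using t by simp
  then show ?thesis by simp
qed

lemma count_eq: "count_list w x = card {y. y < length w \<and> w ! y = x}"
  by (simp add: count_list_eq_length_filter length_filter_conv_card eq_commute)

lemma ltc_sum:
  assumes s: "1 \<le> s" "s < k"
  shows "ltc w (a (Suc s)) = (\<Sum>i=1..s. count_list w (a i))"
proof -
  let ?A = "\<lambda>i. {y. y < length w \<and> w ! y = a i}"
  have eq: "{y. y < length w \<and> w ! y < a (Suc s)} = (\<Union>i\<in>{1..s}. ?A i)"
  proof (rule set_eqI, rule iffI)
    fix y assume y: "y \<in> {y. y < length w \<and> w ! y < a (Suc s)}"
    then obtain t where t: "t \<in> {1..k}" "w ! y = a t" using letter by blast
    then have "t < Suc s" using a_less_iff[of t "Suc s"] s y by simp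
    then show "y \<in> (\<Union>i\<in>{1..s}. ?A i)" using t y by auto
  next
    fix y assume "y \<in> (\<Union>i\<in>{1..s}. ?A i)"
    then obtain i where i: "i \<in> {1..s}" "y < length w" "w ! y = a i" by blast
    then have "a i < a (Suc s)" using a_less_iff[of i "Suc s"] s by simp
    then show "y \<in> {y. y < length w \<and> w ! y < a (Suc s)}" using i by simp
  qed
  have "card (\<Union>i\<in>{1..s}. ?A i) = (\<Sum>i\<in>{1..s}. card (?A i))"
  proof (rule card_UN_disjoint)
    show "\<forall>i\<in>{1..s}. \<forall>j\<in>{1..s}. i \<noteq> j \<longrightarrow> ?A i \<inter> ?A j = {}"
      using a_inj s by fastforce
  qed auto
  then show ?thesis using eq unfolding ltc_def count_eq by simp
qed

lemma gtc_sum: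
  assumes s: "1 \<le> s" "s < k"
  shows "gtc w (a s) = (\<Sum>i=s+1..k. count_list w (a i))"
proof -
  let ?A = "\<lambda>i. {y. y < length w \<and> w ! y = a i}"
  have eq: "{y. y < length w \<and> a s < w ! y} = (\<Union>i\<in>{s+1..k}. ?A i)"
  proof (rule set_eqI, rule iffI)
    fix y assume y: "y \<in> {y. y < length w \<and> a s < w ! y}"
    then obtain t where t: "t \<in> {1..k}" "w ! y = a t" using letter by blast
    then have "s < t" using a_less_iff[of s t] s y by simp
    then show "y \<in> (\<Union>i\<in>{s+1..k}. ?A i)" using t y by auto
  next
    fix y assume "y \<in> (\<Union>i\<in>{s+1..k}. ?A i)"
    then obtain i where i: "i \<in> {s+1..k}" "y < length w" "w ! y = a i" by blast
    then have "a s < a i" using a_less_iff[of s i] s by simp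
    then show "y \<in> {y. y < length w \<and> a s < w ! y}" using i by simp
  qed
  have "card (\<Union>i\<in>{s+1..k}. ?A i) = (\<Sum>i\<in>{s+1..k}. card (?A i))"
  proof (rule card_UN_disjoint)
    show "\<forall>i\<in>{s+1..k}. \<forall>j\<in>{s+1..k}. i \<noteq> j \<longrightarrow> ?A i \<inter> ?A j = {}"
      using a_inj s by fastforce
  qed auto
  then show ?thesis using eq unfolding gtc_def count_eq by simp
qed

lemma main_local:
  assumes s: "1 \<le> s" "s < k"
  shows "\<pi> s = [] \<longleftrightarrow> (\<Sum>i=1..s. count_list w (a i)) = (\<Sum>i=s+1..k. count_list w (a i))"
proof -
  have z: "e s = 0" "e (Suc s) = 0" using all_e_zero[OF s] by auto
  have r1: "rk w (Suc (qq \<pi> s)) = gtc w (a s)"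
    using rk_Suc[OF pc qq_lt[of s]] w_qq[of s] s z by simp
  have r2: "rk w (qq \<pi> (Suc s)) = ltc w (a (Suc s))"
    using rk_split[OF pc qq_Suc_lt[OF s]] w_qq[of "Suc s"] s z by simp
  have Q: "qq \<pi> (Suc s) = qq \<pi> s + length (\<pi> s) + 1" using qq_Suc s by simp
  have lt2: "qq \<pi> (Suc s) < length w" using qq_Suc_lt[OF s] .
  have lt1: "Suc (qq \<pi> s) < length w" using lt2 Q by simp
  have "\<pi> s = [] \<longleftrightarrow> Suc (qq \<pi> s) = qq \<pi> (Suc s)" using Q by simp
  also have "\<dots> \<longleftrightarrow> rk w (Suc (qq \<pi> s)) = rk w (qq \<pi> (Suc s))"
    using rk_inj[OF pc lt1 lt2] by auto
  also have "\<dots> \<longleftrightarrow> gtc w (a s) = ltc w (a (Suc s))" using r1 r2 by simp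
  finally show ?thesis using ltc_sum[OF s] gtc_sum[OF s] by auto
qed

end

theorem corollary6p3:
  fixes w :: "'a::linorder list" and k :: nat and a :: "nat \<Rightarrow> 'a" and \<pi> :: "nat \<Rightarrow> 'a list"
  assumes "perfectly_clustering w"
    and "palindromic_special_factorization w k a \<pi>"
  shows "\<forall>s\<in>{1..<k}. (\<pi> s = [] \<longleftrightarrow>
           (\<Sum>i=1..s. count_list w (a i)) = (\<Sum>i=s+1..k. count_list w (a i)))"
  using main_local[OF assms] by auto

end
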